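(* Let $m\geq 5$ be a square-free integer with $m\equiv 1\pmod 4$, and let $K=\mathbb{Q}(\sqrt m)$. Then: if $\lfloor\sqrt m\rfloor$ is an even integer greater than $2$, then $U_K=\{1\}\subset\mathcal{F}_K=\{1,\ \tfrac{-3+\lfloor\sqrt m\rfloor+\sqrt m}{2},\ 1+\min T_K\}$ with $\tfrac{-3+\lfloor\sqrt m\rfloor+\sqrt m}{2}=\min T_K$; if $m=5$, then $U_K=\mathcal{F}_K=\{\tfrac{-1+\sqrt5}{2}=2\cos(2\pi/5),\ 1,\ \tfrac{1+\sqrt5}{2}=2\cos(2\pi/10)\}$; if $\lfloor\sqrt m\rfloor$ is odd, then $U_K=\{1\}\subset\mathcal{F}_K=\{1,\ \tfrac{-2+\lfloor\sqrt m\rfloor+\sqrt m}{2},\ 1+\min T_K\}$ with $\tfrac{-2+\lfloor\sqrt m\rfloor+\sqrt m}{2}=\min T_K$.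
   Context: For a real number field $K$, $\wp_K$ is the set of Pisot numbers $\theta\in K$ (real algebraic integers $>1$ whose other conjugates have modulus $<1$) with $\mathbb{Q}(\theta)=K$, enumerated $\theta_1<\theta_2<\cdots$; $\mathcal{F}_K:=\{\theta_{n+1}-\theta_n\mid n\in\mathbb{N}\}$. $U_K$ is the set of root of unity trace numbers in $K$, i.e. positive algebraic integers of the form $2\cos(2k\pi/n)$ with $n\geq4$, $1\leq k\leq n-1$, $\gcd(k,n)=1$, lying in $K$. $T_K$ is the set of algebraic integers $\beta\in K$ with $\beta>2$ whose conjugate $\beta'$ (image under the nontrivial embedding of $K$) lies in $(-2,2)$, $\beta'\neq0$. *)

theory Defs
  imports "HOL-Analysis.Analysis" "HOL-Computational_Algebra.Computational_Algebra"
begin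

definition QK :: "int \<Rightarrow> real set" where
  "QK m = {of_rat a + of_rat b * sqrt (real_of_int m) | a b. True}"

definition qconj :: "int \<Rightarrow> real \<Rightarrow> real" where
  "qconj m x = (THE y. \<exists>a b. x = of_rat a + of_rat b * sqrt (real_of_int m)
                           \<and> y = of_rat a - of_rat b * sqrt (real_of_int m))"

definition gen_field :: "real \<Rightarrow> real set" where
  "gen_field t = {poly (map_poly of_rat p) t / poly (map_poly of_rat q) t | p q.
                    poly (map_poly of_rat q) t \<noteq> 0}"

definition alg_int :: "'a :: field_char_0 \<Rightarrow> bool" where
  "alg_int x \<longleftrightarrow> (\<exists>p :: int poly. lead_coeff p = 1 \<and> poly (map_poly of_int p) x = 0)"

definition pisot :: "real \<Rightarrow> bool" where
  "pisot t \<longleftrightarrow> alg_int t \<and> t > 1 \<and>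
     (\<exists>p :: rat poly. irreducible p \<and> poly (map_poly of_rat p) (complex_of_real t) = 0 \<and>
        (\<forall>z. poly (map_poly of_rat p) z = 0 \<and> z \<noteq> complex_of_real t \<longrightarrow> cmod z < 1))"

definition pisotK :: "int \<Rightarrow> real set" where
  "pisotK m = {t. pisot t \<and> t \<in> QK m \<and> gen_field t = QK m}"

definition pisot_enum :: "int \<Rightarrow> nat \<Rightarrow> real" where
  "pisot_enum m = (THE f. strict_mono f \<and> range f = pisotK m)"

definition FK :: "int \<Rightarrow> real set" where
  "FK m = {pisot_enum m (Suc n) - pisot_enum m n | n. True}"

definition UK :: "int \<Rightarrow> real set" where
  "UK m = {x. x > 0 \<and> alg_int x \<and> x \<in> QK m \<and>
     (\<exists>n k :: nat. n \<ge> 4 \<and> 1 \<le> k \<and> k \<le> n - 1 \<and> coprime k n \<and>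
        x = 2 * cos (2 * real k * pi / real n))}"

definition TK :: "int \<Rightarrow> real set" where
  "TK m = {b. b \<in> QK m \<and> alg_int b \<and> b > 2 \<and>
     -2 < qconj m b \<and> qconj m b < 2 \<and> qconj m b \<noteq> 0}"

end

theory Submission
  imports Defs
begin
lemma map_poly_of_rat_add: "map_poly (of_rat::rat\<Rightarrow>'a::field_char_0) (p + q) = map_poly of_rat p + map_poly of_rat q"
  by (rule poly_eqI) (simp add: coeff_map_poly of_rat_add)

lemma map_poly_of_rat_smult: "map_poly (of_rat::rat\<Rightarrow>'a::field_char_0) (smult a q) = smult (of_rat a) (map_poly of_rat q)"
  by (rule poly_eqI) (simp add: coeff_map_poly of_rat_mult)

lemma map_poly_of_rat_mult: "map_poly (of_rat::rat\<Rightarrow>'a::field_char_0) (p * q) = map_poly of_rat p * map_poly of_rat q"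
proof (induction p)
  case (pCons a p)
  show ?case
    by (simp add: mult_pCons_left map_poly_of_rat_add map_poly_of_rat_smult map_poly_pCons pCons.IH)
qed simp

lemma of_real_of_rat': "(of_real (of_rat a :: real) :: 'a::real_field) = of_rat a"
proof -
  obtain n d where "quotient_of a = (n,d)" by (cases "quotient_of a")
  hence "a = of_int n / of_int d" by (rule quotient_of_div)
  thus ?thesis by (simp add: of_rat_divide)
qed

lemma poly_of_rat_complex: "poly (map_poly of_rat p) (complex_of_real t) = complex_of_real (poly (map_poly of_rat p) t)"
  by (induction p) (simp_all add: map_poly_pCons of_real_of_rat')

lemma poly_of_rat_rat: "poly (map_poly (of_rat::rat\<Rightarrow>'a::field_char_0) p) (of_rat q) = of_rat (poly p q)"
  by (induction p) (simp_all add: map_poly_pCons of_rat_add of_rat_mult)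

lemma map_poly_of_rat_of_int: "map_poly (of_rat::rat\<Rightarrow>'a::field_char_0) (map_poly of_int p) = map_poly of_int p"
  by (simp add: map_poly_map_poly o_def)

lemma map_poly_of_int_add: "map_poly (of_int::int\<Rightarrow>'a::comm_ring_1) (p + q) = map_poly of_int p + map_poly of_int q"
  by (rule poly_eqI) (simp add: coeff_map_poly)

lemma map_poly_of_int_smult: "map_poly (of_int::int\<Rightarrow>'a::comm_ring_1) (smult a q) = smult (of_int a) (map_poly of_int q)"
  by (rule poly_eqI) (simp add: coeff_map_poly)

lemma map_poly_of_int_mult: "map_poly (of_int::int\<Rightarrow>'a::comm_ring_1) (p * q) = map_poly of_int p * map_poly of_int q"
proof (induction p)
  case (pCons a p)
  show ?case
    by (simp add: mult_pCons_left map_poly_of_int_add map_poly_of_int_smult map_poly_pCons pCons.IH)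
qed simp

lemma map_poly_of_int_inj: "map_poly (of_int::int\<Rightarrow>'a::ring_char_0) p = map_poly of_int q \<Longrightarrow> p = q"
  by (metis (mono_tags, lifting) coeff_map_poly of_int_0 of_int_eq_iff poly_eqI)

lemma gauss_denom: "\<exists>E h. E > (0::int) \<and> map_poly of_int h = smult (of_int E) (q :: rat poly)"
proof (induction q)
  case 0
  show ?case by (rule exI[of _ 1], rule exI[of _ 0]) simp
next
  case (pCons a q)
  then obtain E h where Eh: "E > 0" "map_poly of_int h = smult (of_int E) q" by blast
  obtain n d where nd: "quotient_of a = (n,d)" by (cases "quotient_of a")
  hence a: "a = of_int n / of_int d" and d: "d > 0" by (auto intro: quotient_of_div quotient_of_denom_pos)
  show ?case
    apply (rule exI[of _ "E * d"], rule exI[of _ "pCons (n * E) (smult d h)"])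
    using Eh d by (simp add: map_poly_pCons map_poly_of_int_smult a mult_ac)
qed

lemma deg1_poly: "degree (p :: 'a::zero poly) \<le> 1 \<Longrightarrow> p = [:coeff p 0, coeff p 1:]"
  by (rule poly_eqI) (auto simp: coeff_pCons coeff_eq_0 split: nat.split)

locale qf =
  fixes m :: int
  assumes m5: "m \<ge> 5" and sqf: "squarefree m" and m4: "m mod 4 = 1"
begin

abbreviation r where "r \<equiv> sqrt (real_of_int m)"

lemma r2: "r * r = real_of_int m" using m5 by simp
lemma rgt2: "r > 2"
proof -
  have "sqrt 4 < r" using m5 by (subst real_sqrt_less_iff) simp
  thus ?thesis by simp
qed

lemma r_irrat: "r \<notin> \<rat>"
proof
  assume "r \<in> \<rat>"
  moreover have "algebraic_int r" by (intro algebraic_int_sqrt) simp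
  ultimately have "r \<in> \<int>" using rational_algebraic_int_is_int by blast
  then obtain k where k: "r = of_int k" by (auto elim: Ints_cases)
  hence "real_of_int (k*k) = real_of_int m" using r2 by simp
  hence km: "k * k = m" by linarith
  hence "k^2 dvd m" by (simp add: power2_eq_square)
  hence "is_unit k" using sqf by (auto simp: squarefree_def)
  hence "\<bar>k\<bar> = 1" by (simp add: zdvd1_eq)
  hence "k * k = 1" by (metis abs_mult_self_eq mult_1)
  thus False using km m5 by simp
qed

lemma rep_unique:
  assumes "of_rat a + of_rat b * r = of_rat a' + of_rat b' * r"
  shows "a = a' \<and> b = b'"
proof (cases "b = b'")
  case True thus ?thesis using assms by simp
next
  case False
  hence "r = of_rat ((a - a') / (b' - b))" using assms
    by (simp add: of_rat_divide of_rat_diff field_simps)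
  thus ?thesis using r_irrat by (metis Rats_of_rat)
qed

lemma qconj_eq: "qconj m (of_rat a + of_rat b * r) = of_rat a - of_rat b * r"
  unfolding qconj_def
proof (rule the_equality)
  fix y assume "\<exists>a' b'. of_rat a + of_rat b * r = of_rat a' + of_rat b' * r \<and> y = of_rat a' - of_rat b' * r"
  then obtain a' b' where "of_rat a + of_rat b * r = of_rat a' + of_rat b' * r" "y = of_rat a' - of_rat b' * r" by blast
  thus "y = of_rat a - of_rat b * r" using rep_unique by blast
qed blast

lemma poly_conj:
  "\<exists>c d. poly (map_poly of_rat p) (of_rat a + of_rat b * r) = of_rat c + of_rat d * r \<and>
         poly (map_poly of_rat p) (of_rat a - of_rat b * r) = of_rat c - of_rat d * r"
proof (induction p)
  case 0
  show ?case by (rule exI[of _ 0], rule exI[of _ 0]) simp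
next
  case (pCons x p)
  then obtain c d where cd: "poly (map_poly of_rat p) (of_rat a + of_rat b * r) = of_rat c + of_rat d * r"
      "poly (map_poly of_rat p) (of_rat a - of_rat b * r) = of_rat c - of_rat d * r" by blast
  show ?case
    apply (rule exI[of _ "x + a * c + b * d * of_int m"], rule exI[of _ "a * d + b * c"])
    using r2 by (simp add: map_poly_pCons cd of_rat_add of_rat_mult algebra_simps)
qed


abbreviation om where "om \<equiv> (1 + r) / 2"
abbreviation cc where "cc \<equiv> (r - 1) / 2"

lemma om_rep: "of_int x + of_int y * om = of_rat (of_int x + of_int y / 2) + of_rat (of_int y / 2) * r"
  by (simp add: of_rat_add of_rat_divide of_rat_mult field_simps)

lemma om_QK: "of_int x + of_int y * om \<in> QK m"
  unfolding QK_def om_rep by blast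

lemma qconj_om: "qconj m (of_int x + of_int y * om) = of_int x - of_int y * cc"
  unfolding om_rep qconj_eq by (simp add: of_rat_add of_rat_divide of_rat_mult field_simps)

lemma om_algint: "alg_int (of_int x + of_int y * om)"
proof -
  obtain k where k: "m = 4 * k + 1" using m4 by (metis mod_div_mult_eq add.commute mult.commute)
  define p where "p = [: x*x + x*y - y*y*k, -(2*x+y), 1 :]"
  have "lead_coeff p = 1" by (simp add: p_def)
  moreover have "poly (map_poly of_int p) (of_int x + of_int y * om) = (0::real)"
  proof -
    have "real_of_int m = 4 * of_int k + 1" using k by simp
    hence "r * r = 4 * of_int k + 1" using r2 by simp
    thus ?thesis by (simp add: p_def map_poly_pCons algebra_simps) (simp add: field_simps)
  qed
  ultimately show ?thesis unfolding alg_int_def by blast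
qed

end

lemma content_int_nonneg: "content (p::int poly) \<ge> 0"
  by (metis abs_ge_zero normalize_content normalize_int_def)

context qf begin

lemma algint_QK:
  assumes zK: "z \<in> QK m" and za: "alg_int z"
  shows "\<exists>x y::int. z = of_int x + of_int y * om"
proof -
  obtain a b where z: "z = of_rat a + of_rat b * r" using zK unfolding QK_def by blast
  obtain p :: "int poly" where p1: "lead_coeff p = 1" and pz: "poly (map_poly of_int p) z = 0"
    using za unfolding alg_int_def by blast
  show ?thesis
  proof (cases "b = 0")
    case True
    have "algebraic_int z" using p1 pz by (auto simp: algebraic_int_altdef_ipoly)
    moreover have "z \<in> \<rat>" using z True by simp
    ultimately have "z \<in> \<int>" by (rule rational_algebraic_int_is_int)
    then obtain x where "z = of_int x" by (auto elim: Ints_cases)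
    thus ?thesis by (intro exI[of _ x] exI[of _ 0]) simp
  next
    case False
    define t where "t = 2 * a"
    define N where "N = a * a - of_int m * b * b"
    define f :: "rat poly" where "f = [:N, -t, 1:]"
    define P :: "rat poly" where "P = map_poly of_int p"
    have Pz: "poly (map_poly of_rat P) z = 0" using pz by (simp add: P_def map_poly_of_rat_of_int)
    have fz: "poly (map_poly of_rat f) z = 0"
      using r2 by (simp add: f_def z t_def N_def map_poly_pCons of_rat_add of_rat_mult of_rat_diff of_rat_minus algebra_simps)
    have f0: "f \<noteq> 0" and fdeg: "degree f = 2" and flc: "lead_coeff f = 1" by (auto simp: f_def)
    define q where "q = P div f"
    define rr where "rr = P mod f"
    have Pqr: "P = f * q + rr" by (simp add: q_def rr_def)
    have rrdeg: "degree rr \<le> 1"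
      using degree_mod_less[OF f0, of P] fdeg by (auto simp: rr_def)
    have "poly (map_poly of_rat rr) z = 0"
      using Pz fz by (simp add: Pqr map_poly_of_rat_add map_poly_of_rat_mult)
    hence rz: "of_rat (coeff rr 0) + of_rat (coeff rr 1) * z = 0"
      by (subst (asm) deg1_poly[OF rrdeg]) (simp add: map_poly_pCons mult.commute)
    have c1: "coeff rr 1 = 0"
    proof (rule ccontr)
      assume "coeff rr 1 \<noteq> 0"
      hence "z = of_rat (- coeff rr 0 / coeff rr 1)" using rz
        by (simp add: of_rat_divide of_rat_minus field_simps)
      hence "r = of_rat ((- coeff rr 0 / coeff rr 1 - a) / b)" using z False
        by (simp add: of_rat_divide of_rat_diff field_simps)
      thus False using r_irrat by (metis Rats_of_rat)
    qed
    hence "coeff rr 0 = 0" using rz by simp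
    hence rr0: "rr = 0" using c1 deg1_poly[OF rrdeg] by simp
    hence Pfq: "P = f * q" using Pqr by simp
    have "lead_coeff P = 1" using p1 by (simp add: P_def degree_map_poly coeff_map_poly)
    hence qlc: "lead_coeff q = 1" using flc by (simp add: Pfq lead_coeff_mult)
    obtain D g where Dg: "D > 0" "map_poly of_int g = smult (of_int D) f" using gauss_denom by blast
    obtain E h where Eh: "E > 0" "map_poly of_int h = smult (of_int E) q" using gauss_denom by blast
    have "map_poly of_int (g * h) = (map_poly of_int (smult (D * E) p) :: rat poly)"
      by (simp add: map_poly_of_int_mult map_poly_of_int_smult Dg Eh Pfq[symmetric] P_def mult_ac)
    hence gh: "g * h = smult (D * E) p" by (rule map_poly_of_int_inj)
    have cp: "content p = 1"
    proof -
      have "content p dvd 1" using content_dvd_coeff[of p "degree p"] p1 by simp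
      thus ?thesis using content_int_nonneg[of p] by (simp add: zdvd1_eq)
    qed
    have "content (g * h) = content (smult (D * E) p)" using gh by simp
    hence cgh: "content g * content h = D * E"
      using cp Dg(1) Eh(1) by (simp add: content_mult normalize_int_def abs_mult)
    have "of_int (coeff g 2) = (of_int D :: rat)"
      using arg_cong[OF Dg(2), of "\<lambda>u. coeff u 2"] by (simp add: coeff_map_poly f_def numeral_2_eq_2)
    hence "coeff g 2 = D" by simp
    hence cgD: "content g dvd D" by (metis content_dvd_coeff)
    have "of_int (coeff h (degree q)) = (of_int E :: rat)"
      using arg_cong[OF Eh(2), of "\<lambda>u. coeff u (degree q)"] qlc by (simp add: coeff_map_poly)
    hence "coeff h (degree q) = E" by simp
    hence chE: "content h dvd E" by (metis content_dvd_coeff)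
    have cg0: "content g \<ge> 0" and ch0: "content h \<ge> 0"
      by (rule content_int_nonneg)+
    have "content g \<le> D" using cgD Dg(1) by (simp add: zdvd_imp_le)
    moreover have "content h \<le> E" using chE Eh(1) by (simp add: zdvd_imp_le)
    ultimately have cgD': "content g = D" using cgh cg0 ch0 Dg(1) Eh(1)
      by (smt (verit) mult_mono mult_strict_right_mono)
    have fint: "coeff f i \<in> \<int>" for i
    proof -
      have "D dvd coeff g i" using cgD' by (metis content_dvd_coeff)
      then obtain k where "coeff g i = D * k" by blast
      moreover have "of_int (coeff g i) = of_int D * coeff f i"
        using arg_cong[OF Dg(2), of "\<lambda>u. coeff u i"] by (simp add: coeff_map_poly)
      ultimately have "coeff f i = of_int k" using Dg(1) by simp
      thus ?thesis by simp
    qed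
    obtain M where M: "N = of_int M" using fint[of 0] by (auto simp: f_def elim: Ints_cases)
    obtain T where T: "t = of_int T" using fint[of 1] by (auto simp: f_def elim!: Ints_cases)
    obtain n d where nd: "quotient_of (2*b) = (n,d)" by (cases "quotient_of (2*b)")
    hence bnd: "2*b = of_int n / of_int d" and d0: "d > 0" and cop: "coprime n d"
      by (auto intro: quotient_of_div quotient_of_denom_pos quotient_of_coprime)
    have "of_int (n*n*m) = (of_int ((T*T - 4*M) * (d*d)) :: rat)"
    proof -
      have "of_int T * of_int T - 4 * of_int M = (of_int m * (2*b) * (2*b) :: rat)"
      proof -
        have "of_int T = 2*a" "of_int M = a*a - of_int m*b*b" using T M by (simp_all add: t_def N_def)
        thus ?thesis by (simp add: algebra_simps)
      qed
      also have "\<dots> = of_int m * (of_int n / of_int d) * (of_int n / of_int d)" by (simp only: bnd)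
      finally have e: "of_int T * of_int T - 4 * of_int M = (of_int m * (of_int n / of_int d) * (of_int n / of_int d) :: rat)" .
      have dn: "(of_int d :: rat) \<noteq> 0" using d0 by simp
      have "(of_int T * of_int T - 4 * of_int M) * (of_int d * of_int d) = (of_int m * of_int n * of_int n :: rat)"
        unfolding e using dn by (simp add: divide_simps)
      thus ?thesis by (simp add: algebra_simps)
    qed
    hence eq: "n*n*m = (T*T - 4*M) * (d*d)" by (simp only: of_int_eq_iff)
    hence "d*d dvd (n*n) * m" by simp
    moreover have "coprime (d*d) (n*n)" using cop by (simp add: coprime_commute)
    ultimately have "d*d dvd m" by (simp add: coprime_dvd_mult_right_iff)
    hence "is_unit d" using sqf by (auto simp: squarefree_def power2_eq_square)
    hence d1: "d = 1" using d0 by simp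
    hence b2: "2*b = of_int n" using bnd by simp
    obtain k where k: "m = 4 * k + 1" using m4 by (metis mod_div_mult_eq add.commute mult.commute)
    have "T*T - n*n = 4*M + 4*k*n*n" using eq d1 k by (simp add: algebra_simps)
    hence "even ((T - n) * (T + n))" by (simp add: algebra_simps)
    hence "even (T - n)"
      by (auto simp: even_mult_iff)
    then obtain X where X: "T - n = 2 * X" by blast
    have "z = of_int X + of_int n * om"
    proof -
      have ea: "a = of_int T / 2" using T by (simp add: t_def)
      have "real_of_rat a = of_int T / 2" by (subst ea) (simp add: of_rat_divide)
      moreover have eb: "b = of_int n / 2" using b2 by simp
      have "real_of_rat b = of_int n / 2" by (subst eb) (simp add: of_rat_divide)
      moreover have "real_of_int T = 2 * of_int X + of_int n" using X by linarith
      ultimately show ?thesis by (simp add: z field_simps)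
    qed
    thus ?thesis by blast
  qed
qed

end

lemma irreducible_deg2:
  fixes f :: "rat poly"
  assumes d: "degree f = 2" and nr: "\<And>q. poly f q \<noteq> 0"
  shows "irreducible f"
proof (rule irreducibleI)
  show f0: "f \<noteq> 0" using d by auto
  show "\<not> is_unit f" using d is_unit_iff_degree[OF f0] by auto
  fix a b assume ab: "f = a * b"
  show "is_unit a \<or> is_unit b"
  proof (rule ccontr)
    assume nu: "\<not> (is_unit a \<or> is_unit b)"
    have a0: "a \<noteq> 0" and b0: "b \<noteq> 0" using ab d by auto
    have "degree a + degree b = 2" using ab d a0 b0 by (simp add: degree_mult_eq)
    moreover have "degree a \<noteq> 0" "degree b \<noteq> 0" using nu a0 b0 by (auto simp: is_unit_iff_degree)
    ultimately have da: "degree a = 1" by linarith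
    hence ae: "a = [:coeff a 0, coeff a 1:]" using deg1_poly[of a] by simp
    have a1: "coeff a 1 \<noteq> 0" using da a0 by (metis leading_coeff_0_iff)
    have "poly a (- coeff a 0 / coeff a 1) = 0"
      using a1 by (subst ae) (simp add: field_simps)
    hence "poly f (- coeff a 0 / coeff a 1) = 0" using ab by simp
    thus False using nr by blast
  qed
qed

context qf begin

lemma QK_poly:
  assumes "z \<in> QK m" shows "poly (map_poly of_rat p) z \<in> QK m"
proof -
  obtain a b where z: "z = of_rat a + of_rat b * r" using assms unfolding QK_def by blast
  obtain c d where "poly (map_poly of_rat p) (of_rat a + of_rat b * r) = of_rat c + of_rat d * r"
    using poly_conj by blast
  thus ?thesis unfolding QK_def z by blast
qed

lemma QK_conj_root:
  assumes "z \<in> QK m" and "poly (map_poly of_rat p) z = 0"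
  shows "poly (map_poly of_rat p) (qconj m z) = 0"
proof -
  obtain a b where z: "z = of_rat a + of_rat b * r" using assms unfolding QK_def by blast
  obtain c d where cd: "poly (map_poly of_rat p) (of_rat a + of_rat b * r) = of_rat c + of_rat d * r"
    "poly (map_poly of_rat p) (of_rat a - of_rat b * r) = of_rat c - of_rat d * r"
    using poly_conj by blast
  have "of_rat c + of_rat d * r = of_rat 0 + of_rat 0 * r" using assms(2) cd(1) z by simp
  hence "c = 0 \<and> d = 0" by (rule rep_unique)
  thus ?thesis using cd(2) z qconj_eq by simp
qed

lemma QK_div:
  assumes "u \<in> QK m" "v \<in> QK m" shows "u / v \<in> QK m"
proof -
  obtain c d where u: "u = of_rat c + of_rat d * r" using assms unfolding QK_def by blast
  obtain e f where v: "v = of_rat e + of_rat f * r" using assms unfolding QK_def by blast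
  show ?thesis
  proof (cases "v = 0")
    case True
    hence "u / v = of_rat 0 + of_rat 0 * r" by simp
    thus ?thesis unfolding QK_def by blast
  next
    case False
    define D where "D = e*e - f*f * of_int m"
    have D0: "D \<noteq> 0"
    proof
      assume D: "D = 0"
      show False
      proof (cases "f = 0")
        case True thus False using D False v by (simp add: D_def)
      next
        case f: False
        have "(of_rat e - of_rat f * r) * v = of_rat D" using r2 by (simp add: v D_def of_rat_diff of_rat_mult algebra_simps)
        hence "of_rat e - of_rat f * r = 0" using D False by simp
        hence "r = of_rat (e / f)" using f by (simp add: of_rat_divide field_simps)
        thus False using r_irrat by (metis Rats_of_rat)
      qed
    qed
    have "u / v = of_rat ((c*e - d*f * of_int m)/D) + of_rat ((d*e - c*f)/D) * r"
    proof -
      have "(of_rat e - of_rat f * r) * v = of_rat D" using r2 by (simp add: v D_def of_rat_diff of_rat_mult algebra_simps)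
      moreover have "(of_rat e - of_rat f * r) * u = of_rat (c*e - d*f * of_int m) + of_rat (d*e - c*f) * r"
        using r2 by (simp add: u of_rat_diff of_rat_mult algebra_simps)
      ultimately have "u / v = (of_rat (c*e - d*f * of_int m) + of_rat (d*e - c*f) * r) / of_rat D"
      proof -
        assume h1: "(of_rat e - of_rat f * r) * v = of_rat D"
          and h2: "(of_rat e - of_rat f * r) * u = of_rat (c*e - d*f * of_int m) + of_rat (d*e - c*f) * r"
        have ne: "of_rat e - of_rat f * r \<noteq> 0" using h1 D0 by auto
        have "u / v = ((of_rat e - of_rat f * r) * u) / ((of_rat e - of_rat f * r) * v)"
          using ne by simp
        thus ?thesis using h1 h2 by simp
      qed
      thus ?thesis using D0 by (simp add: of_rat_divide add_divide_distrib)
    qed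
    thus ?thesis unfolding QK_def by blast
  qed
qed

lemma gen_field_irr:
  assumes "z \<in> QK m" "z \<notin> \<rat>" shows "gen_field z = QK m"
proof
  show "gen_field z \<subseteq> QK m"
    unfolding gen_field_def using QK_div QK_poly assms(1) by blast
next
  obtain a b where z: "z = of_rat a + of_rat b * r" using assms unfolding QK_def by blast
  have b0: "b \<noteq> 0" using assms z by auto
  show "QK m \<subseteq> gen_field z"
  proof
    fix w assume "w \<in> QK m"
    then obtain e f where w: "w = of_rat e + of_rat f * r" unfolding QK_def by blast
    have "w = poly (map_poly of_rat [:e - f * a / b, f / b:]) z / poly (map_poly of_rat 1) z"
      using b0 by (simp add: w z map_poly_pCons of_rat_diff of_rat_mult of_rat_divide field_simps)
    moreover have "poly (map_poly of_rat (1::rat poly)) z \<noteq> (0::real)" by simp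
    ultimately show "w \<in> gen_field z" unfolding gen_field_def by blast
  qed
qed

lemma gen_field_rat:
  assumes "z \<in> \<rat>" shows "gen_field z \<noteq> QK m"
proof
  assume eq: "gen_field z = QK m"
  obtain q where q: "z = of_rat q" using assms by (auto elim: Rats_cases)
  have "r = of_rat 0 + of_rat 1 * r" by simp
  hence "r \<in> QK m" unfolding QK_def by blast
  hence "r \<in> gen_field z" using eq by simp
  then obtain p1 p2 where "r = poly (map_poly of_rat p1) z / poly (map_poly of_rat p2) z"
    unfolding gen_field_def by blast
  hence "r = of_rat (poly p1 q / poly p2 q)" by (simp add: q poly_of_rat_rat of_rat_divide)
  thus False using r_irrat by (metis Rats_of_rat)
qed

lemma om_rat_iff: "of_int x + of_int y * om \<in> \<rat> \<longleftrightarrow> y = 0"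
proof
  assume h: "of_int x + of_int y * om \<in> \<rat>"
  show "y = 0"
  proof (rule ccontr)
    assume y: "y \<noteq> 0"
    have "r = 2 * (of_int x + of_int y * om - of_int x) / of_int y - 1" using y by (simp add: field_simps)
    moreover have "2 * (of_int x + of_int y * om - of_int x) / of_int y - 1 \<in> \<rat>" using h by (intro Rats_diff Rats_divide Rats_mult) auto
    ultimately show False using r_irrat by simp
  qed
qed simp

lemma om_sum_prod:
  obtains k where "m = 4*k+1"
    "(of_int x + of_int y * om) + (of_int x - of_int y * cc) = of_int (2*x+y)"
    "(of_int x + of_int y * om) * (of_int x - of_int y * cc) = of_int (x*x + x*y - y*y*k)"
proof -
  obtain k where k: "m = 4 * k + 1" using m4 by (metis mod_div_mult_eq add.commute mult.commute)
  have "r * r = 4 * of_int k + 1" using r2 k by simp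
  hence "(of_int x + of_int y * om) * (of_int x - of_int y * cc) = of_int (x*x + x*y - y*y*k)"
    by (simp add: algebra_simps) (simp add: field_simps)
  moreover have "(of_int x + of_int y * om) + (of_int x - of_int y * cc) = of_int (2*x+y)"
    by (simp add: field_simps)
  ultimately show ?thesis using that k by blast
qed

lemma pisotK_char:
  "pisotK m = {of_int x + of_int y * om | x y. y \<ge> 1 \<and> \<bar>of_int x - of_int y * cc\<bar> < 1}"
proof (intro set_eqI iffI)
  fix t assume "t \<in> pisotK m"
  hence tK: "t \<in> QK m" and pt: "pisot t" and gt: "gen_field t = QK m" unfolding pisotK_def by auto
  obtain x y where t: "t = of_int x + of_int y * om" using algint_QK tK pt unfolding pisot_def by blast
  have y0: "y \<noteq> 0" using gen_field_rat[of t] gt om_rat_iff t by auto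
  obtain p where pz: "poly (map_poly of_rat p) (complex_of_real t) = 0"
    and oth: "\<And>w. poly (map_poly of_rat p) w = 0 \<and> w \<noteq> complex_of_real t \<longrightarrow> cmod w < 1"
    using pt unfolding pisot_def by blast
  have "poly (map_poly of_rat p) t = 0" using pz by (simp add: poly_of_rat_complex)
  hence "poly (map_poly of_rat p) (qconj m t) = 0" using QK_conj_root tK by blast
  define t' where "t' = of_int x - of_int y * cc"
  have "qconj m t = t'" unfolding t t'_def by (rule qconj_om)
  hence "poly (map_poly of_rat p) t' = 0" using \<open>poly (map_poly of_rat p) (qconj m t) = 0\<close> by simp
  hence c0: "poly (map_poly of_rat p) (complex_of_real t') = 0"
    by (simp only: poly_of_rat_complex of_real_eq_0_iff)
  have "t' \<noteq> t" using y0 rgt2 m5 by (simp add: t t'_def field_simps)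
  hence "complex_of_real t' \<noteq> complex_of_real t" by simp
  hence "cmod (complex_of_real t') < 1" using oth c0 by blast
  hence "\<bar>t'\<bar> < 1" by (simp only: norm_of_real)
  hence lt: "\<bar>of_int x - of_int y * cc\<bar> < 1" unfolding t'_def .
  have "t > 1" using pt unfolding pisot_def by blast
  hence "of_int y * r > 0" using lt by (simp add: t field_simps)
  hence "y > 0" using rgt2 m5 by (simp add: zero_less_mult_iff)
  thus "t \<in> {of_int x + of_int y * om | x y. y \<ge> 1 \<and> \<bar>of_int x - of_int y * cc\<bar> < 1}"
    using t lt by (intro CollectI exI[of _ x] exI[of _ y]) simp
next
  fix t assume "t \<in> {of_int x + of_int y * om | x y. y \<ge> 1 \<and> \<bar>of_int x - of_int y * cc\<bar> < 1}"
  then obtain x y where t: "t = of_int x + of_int y * om" and y1: "y \<ge> 1" and lt: "\<bar>of_int x - of_int y * cc\<bar> < 1"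
    by blast
  obtain k where k: "m = 4*k+1"
    and sp: "(of_int x + of_int y * om) + (of_int x - of_int y * cc) = of_int (2*x+y)"
      "(of_int x + of_int y * om) * (of_int x - of_int y * cc) = of_int (x*x + x*y - y*y*k)"
    by (rule om_sum_prod)
  define t' where "t' = of_int x - of_int y * cc"
  define f :: "rat poly" where "f = [:of_int (x*x + x*y - y*y*k), - of_int (2*x+y), 1:]"
  have fev: "poly (map_poly of_rat f) w = (w - t) * (w - t')" for w :: real
  proof -
    have "poly (map_poly of_rat f) w = of_int (x*x + x*y - y*y*k) - of_int (2*x+y) * w + w * w"
      by (simp add: f_def map_poly_pCons algebra_simps of_rat_add of_rat_mult of_rat_diff of_rat_minus)
    also have "\<dots> = (w - t) * (w - t')" unfolding sp(2)[symmetric] sp(1)[symmetric] t'_def t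
      by (simp add: algebra_simps)
    finally show ?thesis .
  qed
  have fevc: "poly (map_poly of_rat f) w = (w - complex_of_real t) * (w - complex_of_real t')" for w :: complex
  proof -
    have "poly (map_poly of_rat f) w = of_int (x*x + x*y - y*y*k) - of_int (2*x+y) * w + w * w"
      by (simp add: f_def map_poly_pCons algebra_simps of_rat_add of_rat_mult of_rat_diff of_rat_minus)
    also have "\<dots> = of_real (of_int (x*x + x*y - y*y*k)) - of_real (of_int (2*x+y)) * w + w * w"
      by simp
    also have "\<dots> = (w - complex_of_real t) * (w - complex_of_real t')"
      unfolding sp(2)[symmetric] sp(1)[symmetric] t'_def t of_real_mult of_real_add
      by (simp add: algebra_simps)
    finally show ?thesis .
  qed
  have tirr: "t \<notin> \<rat>" using om_rat_iff t y1 by simp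
  have t'irr: "t' \<notin> \<rat>"
  proof -
    have "t' = of_int (x + y) + of_int (- y) * om" by (simp add: t'_def field_simps)
    thus ?thesis using om_rat_iff[of "x+y" "-y"] y1 by (simp only:)
  qed
  have irr: "irreducible f"
  proof (rule irreducible_deg2)
    show "degree f = 2" by (simp add: f_def)
    fix q
    show "poly f q \<noteq> 0"
    proof
      assume "poly f q = 0"
      hence "poly (map_poly of_rat f) (of_rat q :: real) = 0" by (simp add: poly_of_rat_rat)
      hence "of_rat q = t \<or> of_rat q = t'" by (simp add: fev)
      thus False using tirr t'irr by (metis Rats_of_rat)
    qed
  qed
  have tt: "t - t' = of_int y * r" by (simp add: t t'_def field_simps)
  have "of_int y * r \<ge> r" using mult_right_mono[of 1 "of_int y" r] y1 rgt2 m5 by simp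
  hence t1: "t > 1" using tt lt rgt2 unfolding t'_def by linarith
  have "pisot t"
    unfolding pisot_def
  proof (intro conjI exI[of _ f])
    show "alg_int t" using t om_algint by simp
    show "t > 1" by (rule t1)
    show "irreducible f" by (rule irr)
    show "poly (map_poly of_rat f) (complex_of_real t) = 0" by (simp add: fevc)
    show "\<forall>w. poly (map_poly of_rat f) w = 0 \<and> w \<noteq> complex_of_real t \<longrightarrow> cmod w < 1"
    proof (intro allI impI)
      fix w assume "poly (map_poly of_rat f) w = 0 \<and> w \<noteq> complex_of_real t"
      hence "w = complex_of_real t'" by (auto simp: fevc)
      moreover have "\<bar>t'\<bar> < 1" using lt by (simp add: t'_def)
      ultimately show "cmod w < 1" by (simp only: norm_of_real)
    qed
  qed
  moreover have "t \<in> QK m" using t om_QK by simp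
  moreover have "gen_field t = QK m" using gen_field_irr tirr \<open>t \<in> QK m\<close> by simp
  ultimately show "t \<in> pisotK m" unfolding pisotK_def by simp
qed

end

lemma strict_mono_range_unique:
  fixes f g :: "nat \<Rightarrow> 'a::linorder"
  assumes f: "strict_mono f" and g: "strict_mono g" and fg: "range f = range g"
  shows "f = g"
proof
  fix n show "f n = g n"
  proof (induction n rule: less_induct)
    case (less n)
    obtain a where a: "g n = f a" using fg by (metis rangeI image_iff)
    obtain b where b: "f n = g b" using fg by (metis rangeI image_iff)
    have "\<not> a < n"
    proof
      assume "a < n"
      hence "g n = g a" using a less by simp
      thus False using \<open>a < n\<close> g by (metis strict_mono_less less_irrefl)
    qed
    hence "f n \<le> g n" using a f by (simp add: strict_mono_less_eq)
    have "\<not> b < n"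
    proof
      assume "b < n"
      hence "f n = f b" using b less by simp
      thus False using \<open>b < n\<close> f by (metis strict_mono_less less_irrefl)
    qed
    hence "g n \<le> f n" using b g by (simp add: strict_mono_less_eq)
    thus ?case using \<open>f n \<le> g n\<close> by simp
  qed
qed

context qf begin

definition YY :: "nat \<Rightarrow> int" where "YY n = int (n div 2) + 1"
definition XX :: "nat \<Rightarrow> int" where "XX n = \<lfloor>of_int (YY n) * cc\<rfloor> + int (n mod 2)"
definition FF :: "nat \<Rightarrow> real" where "FF n = of_int (XX n) + of_int (YY n) * om"

lemma cc_mult_not_int:
  assumes "y \<noteq> 0" shows "of_int y * cc \<noteq> of_int k"
proof
  assume h: "of_int y * cc = of_int k"
  have "r = 2 * of_int k / of_int y + 1" using h assms by (simp add: field_simps)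
  hence "r \<in> \<rat>" by simp
  thus False using r_irrat by simp
qed

lemma floor_cc_lt: "y \<noteq> 0 \<Longrightarrow> of_int \<lfloor>of_int y * cc\<rfloor> < of_int y * cc"
  using cc_mult_not_int[of y "\<lfloor>of_int y * cc\<rfloor>"] of_int_floor_le[of "of_int y * cc"] by linarith

lemma FF_char: "\<bar>of_int (XX n) - of_int (YY n) * cc\<bar> < 1"
proof -
  have y: "YY n \<noteq> 0" by (simp add: YY_def)
  define fl where "fl = \<lfloor>of_int (YY n) * cc\<rfloor>"
  have a: "of_int fl < of_int (YY n) * cc" using floor_cc_lt[OF y] unfolding fl_def .
  have b: "of_int (YY n) * cc < of_int fl + 1" unfolding fl_def by linarith
  have "n mod 2 = 0 \<or> n mod 2 = 1" by auto
  moreover have "XX n = fl + int (n mod 2)" by (simp add: XX_def fl_def)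
  ultimately have "XX n = fl \<or> XX n = fl + 1" by auto
  thus ?thesis using a b by auto
qed

lemma FF_pisot: "range FF = pisotK m"
proof (intro set_eqI iffI)
  fix t assume "t \<in> range FF"
  then obtain n where "t = FF n" by blast
  moreover have "YY n \<ge> 1" by (simp add: YY_def)
  ultimately show "t \<in> pisotK m" unfolding pisotK_char FF_def using FF_char by blast
next
  fix t assume "t \<in> pisotK m"
  then obtain x y where t: "t = of_int x + of_int y * om" and y1: "y \<ge> 1"
    and lt: "\<bar>of_int x - of_int y * cc\<bar> < 1" unfolding pisotK_char by blast
  define fl where "fl = \<lfloor>of_int y * cc\<rfloor>"
  have "of_int fl \<le> of_int y * cc" "of_int y * cc < of_int fl + 1" unfolding fl_def by linarith+
  hence "of_int x > of_int fl - (1::real)" "of_int x < of_int fl + (2::real)" using lt by linarith+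
  hence "x \<ge> fl" "x \<le> fl + 1" by linarith+
  define n where "n = 2 * nat (y - 1) + nat (x - fl)"
  have "n div 2 = nat (y - 1)" "n mod 2 = nat (x - fl)" using \<open>x \<ge> fl\<close> \<open>x \<le> fl + 1\<close> by (auto simp: n_def)
  hence "YY n = y" "XX n = x" using y1 \<open>x \<ge> fl\<close> by (auto simp: YY_def XX_def fl_def)
  hence "t = FF n" by (simp add: FF_def t)
  thus "t \<in> range FF" by blast
qed

lemma om_gt1: "om > 1" using rgt2 m5 by simp
lemma cc_pos: "cc > 0" using rgt2 m5 by simp

lemma FF_even: "FF (Suc (2*j)) = FF (2*j) + 1"
  by (simp add: FF_def XX_def YY_def)

lemma FF_odd: "FF (Suc (Suc (2*j))) - FF (Suc (2*j)) =
   of_int (\<lfloor>of_int (int j + 2) * cc\<rfloor> - \<lfloor>of_int (int j + 1) * cc\<rfloor>) + cc"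
proof -
  have h: "Suc (2*j) div 2 = j" "Suc (2*j) mod 2 = 1" "Suc (Suc (2*j)) div 2 = j+1" "Suc (Suc (2*j)) mod 2 = 0"
    by presburger+
  show ?thesis unfolding FF_def XX_def YY_def h by (simp add: algebra_simps) (simp add: field_simps)
qed

lemma FF_mono: "strict_mono FF"
proof (rule strict_monoI_Suc)
  fix n
  show "FF n < FF (Suc n)"
  proof (cases "even n")
    case True
    then obtain j where "n = 2*j" by blast
    thus ?thesis using FF_even by simp
  next
    case False
    then obtain j where n: "n = Suc (2*j)" by (metis oddE Suc_eq_plus1)
    have "\<lfloor>of_int (int j + 1) * cc\<rfloor> \<le> \<lfloor>of_int (int j + 2) * cc\<rfloor>"
      using cc_pos by (intro floor_mono) (simp add: mult_right_mono)
    hence "real_of_int \<lfloor>of_int (int j + 1) * cc\<rfloor> \<le> real_of_int \<lfloor>of_int (int j + 2) * cc\<rfloor>"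
      by (simp only: of_int_le_iff)
    hence "FF (Suc (2*j)) < FF (Suc (Suc (2*j)))" using FF_odd[of j] cc_pos
      by (simp only: of_int_diff)
    thus ?thesis by (simp add: n)
  qed
qed

lemma pisot_enum_eq: "pisot_enum m = FF"
  unfolding pisot_enum_def
proof (rule the_equality)
  show "strict_mono FF \<and> range FF = pisotK m" using FF_mono FF_pisot by simp
  fix f :: "nat \<Rightarrow> real" assume "strict_mono f \<and> range f = pisotK m"
  thus "f = FF" using strict_mono_range_unique[of f FF] FF_mono FF_pisot by simp
qed

end

context qf begin

definition gg :: "nat \<Rightarrow> int" where "gg j = \<lfloor>of_int (int j + 1) * cc\<rfloor>"
definition ee :: "nat \<Rightarrow> int" where "ee j = gg (Suc j) - gg j - \<lfloor>cc\<rfloor>"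

lemma ee_01: "ee j = 0 \<or> ee j = 1"
proof -
  have "of_int (int (Suc j) + 1) * cc = of_int (int j + 1) * cc + cc" by (simp add: field_simps)
  hence "gg (Suc j) = \<lfloor>of_int (int j + 1) * cc + cc\<rfloor>" unfolding gg_def by (rule arg_cong[where f=floor])
  thus ?thesis unfolding ee_def gg_def by (simp add: floor_add)
qed

lemma fc_bounds: "0 < cc - of_int \<lfloor>cc\<rfloor>" "cc - of_int \<lfloor>cc\<rfloor> < 1"
proof -
  have "of_int \<lfloor>of_int 1 * cc\<rfloor> < of_int 1 * cc" by (rule floor_cc_lt) simp
  thus "0 < cc - of_int \<lfloor>cc\<rfloor>" by simp
  show "cc - of_int \<lfloor>cc\<rfloor> < 1" by linarith
qed

lemma ee_1_ex: "\<exists>j. ee j = 1"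
proof (rule ccontr)
  assume "\<not> (\<exists>j. ee j = 1)"
  hence e0: "ee j = 0" for j using ee_01 by blast
  have gj: "gg j = (int j + 1) * \<lfloor>cc\<rfloor>" for j
  proof (induction j)
    case 0 show ?case by (simp add: gg_def)
  next
    case (Suc j) thus ?case using e0[of j] by (simp add: ee_def algebra_simps)
  qed
  define fc where "fc = cc - of_int \<lfloor>cc\<rfloor>"
  have fc0: "fc > 0" using fc_bounds by (simp add: fc_def)
  obtain j where j: "1 < of_nat j * fc" using ex_less_of_nat_mult[OF fc0] by blast
  have "of_int (int j + 1) * cc < of_int (gg j) + 1" unfolding gg_def by linarith
  hence "(of_nat j + 1) * cc < (of_nat j + 1) * of_int \<lfloor>cc\<rfloor> + 1" by (simp add: gj)
  hence "(of_nat j + 1) * fc < 1" by (simp add: fc_def algebra_simps)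
  thus False using j fc0 by (simp add: algebra_simps)
qed

lemma ee_0_ex: "\<exists>j. ee j = 0"
proof (rule ccontr)
  assume "\<not> (\<exists>j. ee j = 0)"
  hence e1: "ee j = 1" for j using ee_01 by blast
  have gj: "gg j = (int j + 1) * \<lfloor>cc\<rfloor> + int j" for j
  proof (induction j)
    case 0 show ?case by (simp add: gg_def)
  next
    case (Suc j) thus ?case using e1[of j] by (simp add: ee_def algebra_simps)
  qed
  define fc where "fc = cc - of_int \<lfloor>cc\<rfloor>"
  have fc1: "1 - fc > 0" using fc_bounds by (simp add: fc_def)
  obtain j where j: "1 < of_nat j * (1 - fc)" using ex_less_of_nat_mult[OF fc1] by blast
  have "of_int (gg j) \<le> of_int (int j + 1) * cc" unfolding gg_def by linarith
  hence "(of_nat j + 1) * of_int \<lfloor>cc\<rfloor> + of_nat j \<le> (of_nat j + 1) * cc" by (simp add: gj)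
  moreover have "(of_nat j + 1) * fc = (of_nat j + 1) * cc - (of_nat j + 1) * of_int \<lfloor>cc\<rfloor>"
    by (simp add: fc_def algebra_simps)
  ultimately have "of_nat j * (1 - fc) \<le> fc" by (simp add: algebra_simps)
  thus False using j fc_bounds by (simp add: fc_def)
qed

lemma FF_diff_odd: "FF (Suc (Suc (2*j))) - FF (Suc (2*j)) = cc + of_int \<lfloor>cc\<rfloor> + of_int (ee j)"
proof -
  have "int (Suc j) + 1 = int j + 2" by simp
  hence "gg (Suc j) = \<lfloor>of_int (int j + 2) * cc\<rfloor>" unfolding gg_def by metis
  moreover have "gg j = \<lfloor>of_int (int j + 1) * cc\<rfloor>" by (simp add: gg_def)
  ultimately show ?thesis using FF_odd[of j] by (simp add: ee_def)
qed

lemma FK_eq: "FK m = {1, cc + of_int \<lfloor>cc\<rfloor>, cc + of_int \<lfloor>cc\<rfloor> + 1}"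
proof (intro set_eqI iffI)
  fix d assume "d \<in> FK m"
  then obtain n where d: "d = FF (Suc n) - FF n" unfolding FK_def pisot_enum_eq by blast
  show "d \<in> {1, cc + of_int \<lfloor>cc\<rfloor>, cc + of_int \<lfloor>cc\<rfloor> + 1}"
  proof (cases "even n")
    case True
    then obtain j where "n = 2*j" by blast
    thus ?thesis using d FF_even by simp
  next
    case False
    then obtain j where n: "n = Suc (2*j)" by (metis oddE Suc_eq_plus1)
    thus ?thesis using d FF_diff_odd[of j] ee_01[of j] by auto
  qed
next
  fix d assume d: "d \<in> {1, cc + of_int \<lfloor>cc\<rfloor>, cc + of_int \<lfloor>cc\<rfloor> + 1}"
  have mem: "FF (Suc n) - FF n \<in> FK m" for n unfolding FK_def pisot_enum_eq by blast
  obtain j0 where j0: "ee j0 = 0" using ee_0_ex by blast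
  obtain j1 where j1: "ee j1 = 1" using ee_1_ex by blast
  have "1 \<in> FK m" using mem[of 0] FF_even[of 0] by simp
  moreover have "cc + of_int \<lfloor>cc\<rfloor> \<in> FK m" using mem[of "Suc (2*j0)"] FF_diff_odd[of j0] j0 by simp
  moreover have "cc + of_int \<lfloor>cc\<rfloor> + 1 \<in> FK m" using mem[of "Suc (2*j1)"] FF_diff_odd[of j1] j1 by simp
  ultimately show "d \<in> FK m" using d by blast
qed

end

lemma map_poly_of_int_diff: "map_poly (of_int::int\<Rightarrow>'a::comm_ring_1) (p - q) = map_poly of_int p - map_poly of_int q"
  by (rule poly_eqI) (simp add: coeff_map_poly)

fun cheb :: "nat \<Rightarrow> int poly" where
  "cheb 0 = [:2:]"
| "cheb (Suc 0) = [:0, 1:]"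
| "cheb (Suc (Suc n)) = [:0, 1:] * cheb (Suc n) - cheb n"

lemma cheb_cos: "poly (map_poly of_int (cheb n)) (2 * cos t) = 2 * cos (of_nat n * (t::real))"
proof (induction n rule: cheb.induct)
  case 1 show ?case by (simp add: map_poly_pCons)
next
  case 2 show ?case by (simp add: map_poly_pCons)
next
  case (3 n)
  have e1: "of_nat (Suc (Suc n)) * t = of_nat (Suc n) * t + t" by (simp add: algebra_simps)
  have e2: "of_nat n * t = of_nat (Suc n) * t - t" by (simp add: algebra_simps)
  have "poly (map_poly of_int (cheb (Suc (Suc n)))) (2 * cos t)
      = 2 * cos t * (2 * cos (of_nat (Suc n) * t)) - 2 * cos (of_nat n * t)"
    using 3 by (simp add: map_poly_of_int_diff map_poly_of_int_mult map_poly_pCons)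
  also have "\<dots> = 2 * cos (of_nat (Suc (Suc n)) * t)"
  proof -
    have gen: "2 * cos t * (2 * cos a) - 2 * cos (a - t) = 2 * cos (a + t)" for a :: real
      by (simp add: cos_add cos_diff algebra_simps)
    show ?thesis unfolding e1 by (subst e2) (rule gen)
  qed
  finally show ?case .
qed

lemma cheb_zw:
  fixes z w :: real
  assumes zw: "z * w = 1"
  shows "poly (map_poly of_int (cheb n)) (z + w) = z ^ n + w ^ n"
proof (induction n rule: cheb.induct)
  case 1 show ?case by (simp add: map_poly_pCons)
next
  case 2 show ?case by (simp add: map_poly_pCons)
next
  case (3 n)
  have a: "z * w ^ Suc n = w ^ n" using zw by (simp add: power_Suc mult.assoc[symmetric])
  have b: "w * z ^ Suc n = z ^ n" using zw by (simp add: power_Suc mult.assoc[symmetric] mult.commute)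
  have "poly (map_poly of_int (cheb (Suc (Suc n)))) (z + w)
      = (z + w) * (z ^ Suc n + w ^ Suc n) - (z ^ n + w ^ n)"
    using 3 by (simp add: map_poly_of_int_diff map_poly_of_int_mult map_poly_pCons)
  also have "\<dots> = z ^ Suc (Suc n) + w ^ Suc (Suc n) + (z * w ^ Suc n) + (w * z ^ Suc n) - (z ^ n + w ^ n)"
    by (simp add: algebra_simps)
  also have "\<dots> = z ^ Suc (Suc n) + w ^ Suc (Suc n)" by (simp only: a b)
  finally show ?case .
qed

lemma cheb_bound:
  fixes w :: real
  assumes n: "n \<ge> 1" and p: "poly (map_poly of_int (cheb n)) w = 2"
  shows "\<bar>w\<bar> \<le> 2"
proof (rule ccontr)
  assume "\<not> \<bar>w\<bar> \<le> 2"
  hence a: "2 < \<bar>w\<bar>" by simp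
  have "2 * 2 < \<bar>w\<bar> * \<bar>w\<bar>" using a by (intro mult_strict_mono) auto
  hence w2: "w * w > 4" using abs_mult_self_eq[of w] by linarith
  define q where "q = sqrt (w * w - 4)"
  have qq: "q * q = w * w - 4" using w2 by (simp add: q_def)
  define z where "z = (w + q) / 2"
  define v where "v = (w - q) / 2"
  have zv: "z * v = 1" using qq by (simp add: z_def v_def field_simps)
  have zvw: "z + v = w" by (simp add: z_def v_def field_simps)
  have e: "z ^ n + v ^ n = 2" using cheb_zw[OF zv, of n] p zvw by simp
  have "(z ^ n) * (v ^ n) = 1" using zv by (simp add: power_mult_distrib[symmetric])
  hence "(z ^ n - 1) * (z ^ n - 1) = z ^ n * (z ^ n + v ^ n - 2)" by (simp add: algebra_simps)
  hence "(z ^ n - 1) * (z ^ n - 1) = 0" using e by simp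
  hence "z ^ n = 1" by simp
  hence "\<bar>z\<bar> = 1" using n power_eq_1_iff[of z n] by auto
  hence "z = 1 \<or> z = -1" by auto
  hence "v = z" using zv by auto
  hence "w = 2 * z" using zvw by simp
  thus False using \<open>z = 1 \<or> z = -1\<close> \<open>\<not> \<bar>w\<bar> \<le> 2\<close> by auto
qed

lemma cos_pi5: "cos (pi / 5) = (1 + sqrt 5) / 4"
proof -
  define c where "c = cos (pi / 5)"
  have "cos (3 * (pi/5)) = cos (pi - 2 * (pi/5))" by (rule arg_cong[where f=cos]) simp
  also have "\<dots> = - cos (2 * (pi / 5))" by (rule cos_pi_minus)
  finally have "cos (3 * (pi/5)) = - cos (2 * (pi / 5))" .
  hence "4 * c ^ 3 - 3 * c = - (2 * c ^ 2 - 1)" unfolding c_def cos_treble_cos cos_double_cos by simp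
  hence "(c + 1) * (4 * c * c - 2 * c - 1) = 0" by (simp add: algebra_simps power2_eq_square power3_eq_cube)
  moreover have "c > 1/2"
  proof -
    have "cos (pi / 3) < cos (pi / 5)" by (rule cos_monotone_0_pi) auto
    thus ?thesis using cos_60 c_def by simp
  qed
  ultimately have "4 * c * c - 2 * c - 1 = 0" by simp
  hence "(4 * c - 1)^2 = 5" by (simp add: algebra_simps power2_eq_square)
  moreover have "4 * c - 1 \<ge> 0" using \<open>c > 1/2\<close> by simp
  ultimately have "4 * c - 1 = sqrt 5" by (metis real_sqrt_unique)
  thus ?thesis unfolding c_def by simp
qed

lemma cos_2pi5: "cos (2 * pi / 5) = (sqrt 5 - 1) / 4"
proof -
  have "cos (2 * pi / 5) = 2 * cos (pi / 5) ^ 2 - 1" using cos_double_cos[of "pi/5"] by simp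
  also have "\<dots> = 2 * ((1 + sqrt 5) / 4)^2 - 1" by (simp add: cos_pi5)
  also have "\<dots> = (sqrt 5 - 1) / 4" by (simp add: power2_eq_square algebra_simps)
  finally show ?thesis .
qed

context qf begin

lemma lin: "cc = r/2 - 1/2" "om = r/2 + 1/2" by simp_all

lemma TK_min:
  assumes r3: "r > 3"
  shows "cc + of_int \<lfloor>cc\<rfloor> \<in> TK m \<and> (\<forall>b\<in>TK m. cc + of_int \<lfloor>cc\<rfloor> \<le> b)"
proof
  have fl1: "of_int \<lfloor>cc\<rfloor> \<le> cc" "cc < of_int \<lfloor>cc\<rfloor> + 1" by linarith+
  have fl2: "of_int \<lfloor>cc\<rfloor> < cc" using floor_cc_lt[of 1] by simp
  have e: "cc + of_int \<lfloor>cc\<rfloor> = of_int (\<lfloor>cc\<rfloor> - 1) + of_int 1 * om" by (simp add: field_simps)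
  have "\<lfloor>cc\<rfloor> \<ge> 1" using r3 by (simp add: le_floor_iff)
  hence f1: "real_of_int \<lfloor>cc\<rfloor> \<ge> 1" by simp
  have "cc > 1" using r3 by simp
  hence gt2: "cc + of_int \<lfloor>cc\<rfloor> > 2" using f1 by linarith
  have qc: "qconj m (cc + of_int \<lfloor>cc\<rfloor>) = of_int (\<lfloor>cc\<rfloor> - 1) - cc"
    unfolding e qconj_om by simp
  have bK: "cc + of_int \<lfloor>cc\<rfloor> \<in> QK m" by (subst e) (rule om_QK)
  have ba: "alg_int (cc + of_int \<lfloor>cc\<rfloor>)" by (subst e) (rule om_algint)
  show "cc + of_int \<lfloor>cc\<rfloor> \<in> TK m"
    unfolding TK_def
  proof (intro CollectI conjI)
    show "qconj m (cc + of_int \<lfloor>cc\<rfloor>) < 2" "-2 < qconj m (cc + of_int \<lfloor>cc\<rfloor>)"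
      "qconj m (cc + of_int \<lfloor>cc\<rfloor>) \<noteq> 0" unfolding qc using fl1 by linarith+
  qed (rule bK ba gt2)+
  show "\<forall>b\<in>TK m. cc + of_int \<lfloor>cc\<rfloor> \<le> b"
  proof
    fix b assume "b \<in> TK m"
    hence bK: "b \<in> QK m" and ba: "alg_int b" and b2: "b > 2" and c1: "-2 < qconj m b" and c2: "qconj m b < 2"
      unfolding TK_def by auto
    obtain x y where b: "b = of_int x + of_int y * om" using algint_QK bK ba by blast
    have qb: "qconj m b = of_int x - of_int y * cc" unfolding b by (rule qconj_om)
    have diff: "b - qconj m b = of_int y * r" by (subst qb, subst b) (simp add: field_simps)
    have "of_int y * r > 0" using diff b2 c2 by linarith
    hence y1: "y \<ge> 1" using rgt2 m5 by (simp add: zero_less_mult_iff)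
    show "cc + of_int \<lfloor>cc\<rfloor> \<le> b"
    proof (cases "y = 1")
      case True
      have "of_int x > cc - 2" using c1 qb True by simp
      hence "of_int x > of_int \<lfloor>cc\<rfloor> - (2::real)" using fl1 by linarith
      hence "x \<ge> \<lfloor>cc\<rfloor> - 1" by linarith
      hence "real_of_int x \<ge> of_int \<lfloor>cc\<rfloor> - 1" by linarith
      thus ?thesis using b True by (simp add: field_simps)
    next
      case False
      hence "y \<ge> 2" using y1 by simp
      hence "of_int y * r \<ge> 2 * r" using rgt2 m5 by (intro mult_right_mono) auto
      hence "b > 2 * r - 2" using diff c1 by linarith
      thus ?thesis using fl1 rgt2 by argo
    qed
  qed
qed

lemma one_UK: "1 \<in> UK m"
proof -
  have "(1::real) = of_int 1 + of_int 0 * om" by simp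
  hence "1 \<in> QK m" "alg_int (1::real)" using om_QK[of 1 0] om_algint[of 1 0] by simp_all
  moreover have "(1::real) = 2 * cos (2 * real (1::nat) * pi / real (6::nat))"
  proof -
    have "2 * real (1::nat) * pi / real (6::nat) = pi / 3" by simp
    thus ?thesis using cos_60 by simp
  qed
  ultimately show ?thesis unfolding UK_def
    by (intro CollectI conjI exI[of _ "6::nat"] exI[of _ "1::nat"]) auto
qed

lemma UK_cases:
  assumes "x \<in> UK m"
  shows "x = 1 \<or> (m = 5 \<and> (x = om \<or> x = om - 1))"
proof -
  obtain n k :: nat where x0: "x > 0" and xa: "alg_int x" and xK: "x \<in> QK m" and n4: "n \<ge> 4"
    and k1: "1 \<le> k" and kn: "k \<le> n - 1" and xc: "x = 2 * cos (2 * real k * pi / real n)"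
    using assms unfolding UK_def by blast
  obtain X Y where xr: "x = of_int X + of_int Y * om" using algint_QK xK xa by blast
  define t where "t = 2 * real k * pi / real n"
  have xt: "x = 2 * cos t" using xc t_def by simp
  have "of_nat n * t = 2 * pi * of_int (int k)" using n4 by (simp add: t_def)
  moreover have "cos (2 * pi * of_int (int k)) = 1" by (rule cos_int_2pin)
  ultimately have px: "poly (map_poly of_int (cheb n)) x = 2" using cheb_cos[of n t] xt by simp
  define Q :: "rat poly" where "Q = map_poly of_int (cheb n - [:2:])"
  have Qev: "poly (map_poly of_rat Q) w = poly (map_poly of_int (cheb n)) w - 2" for w :: real
    by (simp only: Q_def map_poly_of_rat_of_int) (simp add: map_poly_of_int_diff map_poly_pCons)
  have "poly (map_poly of_rat Q) x = 0" using px Qev by simp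
  hence "poly (map_poly of_rat Q) (qconj m x) = 0" using QK_conj_root xK by blast
  hence "poly (map_poly of_int (cheb n)) (qconj m x) = 2" using Qev by simp
  hence x'b: "\<bar>qconj m x\<bar> \<le> 2" using n4 cheb_bound[of n "qconj m x"] by simp
  have qx: "qconj m x = of_int X - of_int Y * cc" unfolding xr by (rule qconj_om)
  have xle: "x \<le> 2" using xt by simp
  have xne2: "x \<noteq> 2"
  proof
    assume "x = 2"
    hence "cos t = 1" using xt by simp
    then obtain i :: int where "t = of_int i * 2 * pi" using cos_one_2pi_int by blast
    hence "real k = of_int i * real n" using n4 by (simp add: t_def field_simps)
    moreover have "0 < real k" "real k < real n" using k1 kn n4 by auto
    ultimately have "0 < of_int i * real n" "of_int i * real n < real n" by auto
    hence "0 < i" "i < 1" using n4 by (auto simp: zero_less_mult_iff mult_less_cancel_right2)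
    thus False by simp
  qed
  have diff: "x - qconj m x = of_int Y * r" by (subst qx, subst xr) (simp add: field_simps)
  have r3': "r < 3 \<Longrightarrow> m = 5"
  proof -
    assume "r < 3"
    hence "r * r < 3 * 3" using rgt2 m5 by (intro mult_strict_mono) auto
    hence "m < 9" using r2 by simp
    thus "m = 5" using m5 m4 by presburger
  qed
  have rne3: "r \<noteq> 3" using r_irrat by auto
  consider "Y = 0" | "Y = 1" | "Y = -1" | "Y \<ge> 2" | "Y \<le> -2" by linarith
  thus ?thesis
  proof cases
    case 1
    hence "x = of_int X" using xr by simp
    hence "0 < X" "X \<le> 2" "X \<noteq> 2" using x0 xle xne2 by auto
    hence "X = 1" by simp
    thus ?thesis using \<open>x = of_int X\<close> by simp
  next
    case 2
    have a: "of_int X + om \<le> 2" using xle xr 2 by simp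
    have b: "of_int X - cc \<ge> -2" using x'b qx 2 by simp
    have "real_of_int X < 1" using a rgt2 by argo
    hence "X \<le> 0" by simp
    moreover have "real_of_int X > -2" using b rgt2 by argo
    hence "X \<ge> -1" by simp
    ultimately have "X = 0 \<or> X = -1" by linarith
    hence "r \<le> 3" using a b lin by auto
    hence "m = 5" using r3' rne3 by linarith
    moreover have "x = om \<or> x = om - 1" using \<open>X = 0 \<or> X = -1\<close> xr 2 by auto
    ultimately show ?thesis by simp
  next
    case 3
    have a: "of_int X - om > 0" using x0 xr 3 by simp argo
    have b: "of_int X + cc \<le> 2" using x'b qx 3 by (simp add: abs_le_iff) argo
    have "real_of_int X > 1" "real_of_int X < 2" using a b rgt2 by argo+
    hence "X > 1" "X < 2" by simp_all
    thus ?thesis by simp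
  next
    case 4
    hence "of_int Y * r \<ge> 2 * r" using rgt2 m5 by (intro mult_right_mono) auto
    thus ?thesis using diff x'b xle x0 rgt2 by argo
  next
    case 5
    hence "of_int (-Y) * r \<ge> 2 * r" using rgt2 m5 by (intro mult_right_mono) auto
    thus ?thesis using diff x'b xle x0 rgt2 by simp
  qed
qed

lemma UK_not5: "m \<noteq> 5 \<Longrightarrow> UK m = {1}"
  using UK_cases one_UK by blast

end

lemma UK_5: "UK 5 = {(-1 + sqrt 5) / 2, 1, (1 + sqrt 5) / 2}"
proof -
  interpret qf 5 by unfold_locales (auto intro: squarefree_prime)
  have om5: "om = (1 + sqrt 5) / 2" by simp
  have c1: "(-1 + sqrt 5) / 2 = 2 * cos (2 * real (1::nat) * pi / real (5::nat))"
    using cos_2pi5 by simp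
  have c2: "(1 + sqrt 5) / 2 = 2 * cos (2 * real (1::nat) * pi / real (10::nat))"
  proof -
    have "2 * real (1::nat) * pi / real (10::nat) = pi / 5" by simp
    thus ?thesis using cos_pi5 by simp
  qed
  have s5: "sqrt 5 > 1" by simp
  have e1: "(-1 + sqrt 5) / 2 = of_int (-1) + of_int 1 * om" by simp
  have a1: "alg_int ((-1 + sqrt 5) / 2)" "(-1 + sqrt 5) / 2 \<in> QK 5"
    using om_QK[of "-1" 1] om_algint[of "-1" 1] by (simp_all only: e1)
  have a1': "(-1 + sqrt 5) / 2 > 0" using s5 by simp
  have m1: "(-1 + sqrt 5) / 2 \<in> UK 5" unfolding UK_def
    by (intro CollectI conjI exI[of _ "5::nat"] exI[of _ "1::nat"]; (rule a1 a1' c1)?; simp)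
  have e2: "(1 + sqrt 5) / 2 = of_int 0 + of_int 1 * om" by simp
  have a2: "alg_int ((1 + sqrt 5) / 2)" "(1 + sqrt 5) / 2 \<in> QK 5"
    using om_QK[of 0 1] om_algint[of 0 1] by (simp_all only: e2)
  have "0 < 1 + sqrt 5" using s5 by linarith
  hence a2': "(1 + sqrt 5) / 2 > 0" by simp
  have m2: "(1 + sqrt 5) / 2 \<in> UK 5" unfolding UK_def
    by (intro CollectI conjI exI[of _ "10::nat"] exI[of _ "1::nat"]; (rule a2 a2' c2)?; simp)
  show ?thesis
  proof (intro equalityI subsetI)
    fix x assume "x \<in> UK 5"
    thus "x \<in> {(-1 + sqrt 5) / 2, 1, (1 + sqrt 5) / 2}" using UK_cases[of x] by (auto simp: field_simps)
  qed (use m1 m2 one_UK in blast)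
qed

theorem proposition2p2:
  fixes m :: int
  assumes "m \<ge> 5" and "squarefree m" and "m mod 4 = 1"
  defines "s \<equiv> \<lfloor>sqrt (real_of_int m)\<rfloor>"
  shows
    "(even s \<and> s > 2 \<longrightarrow>
        UK m = {1} \<and> UK m \<subset> FK m \<and>
        FK m = {1, (-3 + real_of_int s + sqrt (real_of_int m)) / 2,
                1 + (-3 + real_of_int s + sqrt (real_of_int m)) / 2} \<and>
        (-3 + real_of_int s + sqrt (real_of_int m)) / 2 \<in> TK m \<and> (\<forall>b\<in>TK m. (-3 + real_of_int s + sqrt (real_of_int m)) / 2 \<le> b))
   \<and> (m = 5 \<longrightarrow>
        UK m = {(-1 + sqrt 5) / 2, 1, (1 + sqrt 5) / 2} \<and>
        FK m = {(-1 + sqrt 5) / 2, 1, (1 + sqrt 5) / 2} \<and>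
        (-1 + sqrt 5) / 2 = 2 * cos (2 * pi / 5) \<and>
        (1 + sqrt 5) / 2 = 2 * cos (2 * pi / 10))
   \<and> (odd s \<longrightarrow>
        UK m = {1} \<and> UK m \<subset> FK m \<and>
        FK m = {1, (-2 + real_of_int s + sqrt (real_of_int m)) / 2,
                1 + (-2 + real_of_int s + sqrt (real_of_int m)) / 2} \<and>
        (-2 + real_of_int s + sqrt (real_of_int m)) / 2 \<in> TK m \<and> (\<forall>b\<in>TK m. (-2 + real_of_int s + sqrt (real_of_int m)) / 2 \<le> b))"
proof -
  interpret qf m using assms(1-3) by unfold_locales
  have sr1: "of_int s \<le> r" and sr2: "r < of_int s + 1" unfolding s_def by linarith+
  have "of_int s \<noteq> r" using r_irrat by (metis Rats_of_int)
  hence sr: "of_int s < r" using sr1 by simp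
  have m5r: "m = 5 \<Longrightarrow> r < 3"
  proof -
    assume "m = 5"
    hence "r = sqrt 5" by simp
    also have "\<dots> < sqrt 9" by (rule real_sqrt_less_mono) simp
    also have "sqrt 9 = (3::real)" by simp
    finally show "r < 3" .
  qed
  have P1: "even s \<and> s > 2 \<longrightarrow>
        UK m = {1} \<and> UK m \<subset> FK m \<and>
        FK m = {1, (-3 + real_of_int s + r) / 2, 1 + (-3 + real_of_int s + r) / 2} \<and>
        (-3 + real_of_int s + r) / 2 \<in> TK m \<and> (\<forall>b\<in>TK m. (-3 + real_of_int s + r) / 2 \<le> b)"
  proof
    assume h: "even s \<and> s > 2"
    then obtain j where j: "s = 2 * j" by blast
    have j2: "j \<ge> 2" using h j by simp
    have "real_of_int s \<ge> 4" using j j2 by simp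
    hence r3: "r > 3" using sr1 by simp
    have m5: "m \<noteq> 5" using m5r r3 by auto
    have fl: "\<lfloor>cc\<rfloor> = j - 1" unfolding floor_eq_iff using sr1 sr2 j by simp
    have V: "(-3 + real_of_int s + r) / 2 = cc + of_int \<lfloor>cc\<rfloor>" using fl j by (simp add: field_simps)
    have UK1: "UK m = {1}" using UK_not5[OF m5] .
    have TKm: "cc + of_int \<lfloor>cc\<rfloor> \<in> TK m \<and> (\<forall>b\<in>TK m. cc + of_int \<lfloor>cc\<rfloor> \<le> b)" using TK_min[OF r3] .
    hence "cc + of_int \<lfloor>cc\<rfloor> > 2" unfolding TK_def by simp
    hence ne: "1 + (cc + of_int \<lfloor>cc\<rfloor>) \<noteq> 1" by simp
    have FK1: "FK m = {1, cc + of_int \<lfloor>cc\<rfloor>, 1 + (cc + of_int \<lfloor>cc\<rfloor>)}" using FK_eq by (simp add: add.commute)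
    show "UK m = {1} \<and> UK m \<subset> FK m \<and>
        FK m = {1, (-3 + real_of_int s + r) / 2, 1 + (-3 + real_of_int s + r) / 2} \<and>
        (-3 + real_of_int s + r) / 2 \<in> TK m \<and> (\<forall>b\<in>TK m. (-3 + real_of_int s + r) / 2 \<le> b)"
      unfolding V using UK1 FK1 TKm ne by auto
  qed
  have P3: "odd s \<longrightarrow>
        UK m = {1} \<and> UK m \<subset> FK m \<and>
        FK m = {1, (-2 + real_of_int s + r) / 2, 1 + (-2 + real_of_int s + r) / 2} \<and>
        (-2 + real_of_int s + r) / 2 \<in> TK m \<and> (\<forall>b\<in>TK m. (-2 + real_of_int s + r) / 2 \<le> b)"
  proof
    assume h: "odd s"
    then obtain j where j: "s = 2 * j + 1" by (metis oddE)
    have "r > 2" by (rule rgt2)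
    hence "real_of_int s > 1" using sr2 by simp
    hence "s \<ge> 2" by simp
    hence "s \<ge> 3" using h by presburger
    hence r3: "r > 3" using sr by simp
    have m5: "m \<noteq> 5" using m5r r3 by auto
    have fl: "\<lfloor>cc\<rfloor> = j" unfolding floor_eq_iff using sr1 sr2 j by simp
    have V: "(-2 + real_of_int s + r) / 2 = cc + of_int \<lfloor>cc\<rfloor>" using fl j by (simp add: field_simps)
    have UK1: "UK m = {1}" using UK_not5[OF m5] .
    have TKm: "cc + of_int \<lfloor>cc\<rfloor> \<in> TK m \<and> (\<forall>b\<in>TK m. cc + of_int \<lfloor>cc\<rfloor> \<le> b)" using TK_min[OF r3] .
    hence "cc + of_int \<lfloor>cc\<rfloor> > 2" unfolding TK_def by simp
    hence ne: "1 + (cc + of_int \<lfloor>cc\<rfloor>) \<noteq> 1" by simp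
    have FK1: "FK m = {1, cc + of_int \<lfloor>cc\<rfloor>, 1 + (cc + of_int \<lfloor>cc\<rfloor>)}" using FK_eq by (simp add: add.commute)
    show "UK m = {1} \<and> UK m \<subset> FK m \<and>
        FK m = {1, (-2 + real_of_int s + r) / 2, 1 + (-2 + real_of_int s + r) / 2} \<and>
        (-2 + real_of_int s + r) / 2 \<in> TK m \<and> (\<forall>b\<in>TK m. (-2 + real_of_int s + r) / 2 \<le> b)"
      unfolding V using UK1 FK1 TKm ne by auto
  qed
  have P2: "m = 5 \<longrightarrow>
        UK m = {(-1 + sqrt 5) / 2, 1, (1 + sqrt 5) / 2} \<and>
        FK m = {(-1 + sqrt 5) / 2, 1, (1 + sqrt 5) / 2} \<and>
        (-1 + sqrt 5) / 2 = 2 * cos (2 * pi / 5) \<and>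
        (1 + sqrt 5) / 2 = 2 * cos (2 * pi / 10)"
  proof
    assume m: "m = 5"
    have r5: "r = sqrt 5" using m by simp
    have "\<lfloor>cc\<rfloor> = 0" unfolding floor_eq_iff using m5r[OF m] rgt2 m by simp
    hence "FK m = {1, cc, cc + 1}" using FK_eq by simp
    also have "\<dots> = {(-1 + sqrt 5) / 2, 1, (1 + sqrt 5) / 2}" unfolding r5 by (auto simp: field_simps)
    finally have FK5: "FK m = {(-1 + sqrt 5) / 2, 1, (1 + sqrt 5) / 2}" .
    have c1: "(-1 + sqrt 5) / 2 = 2 * cos (2 * pi / 5)" using cos_2pi5 by simp
    have "2 * pi / 10 = pi / 5" by simp
    hence c2: "(1 + sqrt 5) / 2 = 2 * cos (2 * pi / 10)" using cos_pi5 by simp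
    show "UK m = {(-1 + sqrt 5) / 2, 1, (1 + sqrt 5) / 2} \<and>
        FK m = {(-1 + sqrt 5) / 2, 1, (1 + sqrt 5) / 2} \<and>
        (-1 + sqrt 5) / 2 = 2 * cos (2 * pi / 5) \<and>
        (1 + sqrt 5) / 2 = 2 * cos (2 * pi / 10)"
      using UK_5 FK5 c1 c2 m by simp
  qed
  show ?thesis using P1 P2 P3 by blast
qed

end
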